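(* For every positive integer $m$, the line graph $L(K_{2m+1})$ of the complete graph on $2m+1$ vertices is a core, i.e. every endomorphism of $L(K_{2m+1})$ is an automorphism.
   Context: An endomorphism of a graph $X$ is a map $f:V(X)\to V(X)$ such that adjacent vertices are mapped to adjacent vertices; $X$ is a core if all its endomorphisms are automorphisms. *)

theory Defs
  imports Main
begin

definition is_endomorphism :: "'a set \<Rightarrow> ('a \<Rightarrow> 'a \<Rightarrow> bool) \<Rightarrow> ('a \<Rightarrow> 'a) \<Rightarrow> bool" where
  "is_endomorphism V E f \<longleftrightarrow>
     (\<forall>x\<in>V. f x \<in> V) \<and> (\<forall>x\<in>V. \<forall>y\<in>V. E x y \<longrightarrow> E (f x) (f y))"

definition is_automorphism :: "'a set \<Rightarrow> ('a \<Rightarrow> 'a \<Rightarrow> bool) \<Rightarrow> ('a \<Rightarrow> 'a) \<Rightarrow> bool" where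
  "is_automorphism V E f \<longleftrightarrow>
     bij_betw f V V \<and> (\<forall>x\<in>V. \<forall>y\<in>V. E x y \<longleftrightarrow> E (f x) (f y))"

definition is_core :: "'a set \<Rightarrow> ('a \<Rightarrow> 'a \<Rightarrow> bool) \<Rightarrow> bool" where
  "is_core V E \<longleftrightarrow> (\<forall>f. is_endomorphism V E f \<longrightarrow> is_automorphism V E f)"

definition lineK_vertices :: "nat \<Rightarrow> nat set set" where
  "lineK_vertices n = {e. e \<subseteq> {0..<n} \<and> card e = 2}"

definition lineK_adj :: "nat set \<Rightarrow> nat set \<Rightarrow> bool" where
  "lineK_adj e e' \<longleftrightarrow> e \<noteq> e' \<and> e \<inter> e' \<noteq> {}"

end

theory Submission
  imports Defs
begin

lemma tri: "{u,v} \<inter> {a,b} \<noteq> {} \<Longrightarrow> {u,v} \<inter> {b,c} \<noteq> {} \<Longrightarrow> {u,v} \<inter> {a,c} \<noteq> {} \<Longrightarrow> {u,v} \<noteq> {a,b} \<Longrightarrow> {u,v} \<noteq> {b,c} \<Longrightarrow> {u,v} \<noteq> {a,c} \<Longrightarrow> u\<noteq>v \<Longrightarrow> a\<noteq>b \<Longrightarrow> c\<noteq>b \<Longrightarrow> c\<noteq>a \<Longrightarrow> False"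
  by (simp add: doubleton_eq_iff) (metis)

lemma clique_common:
  assumes two: "\<forall>e\<in>C. card e = 2"
    and cl: "\<forall>e\<in>C. \<forall>e'\<in>C. e \<noteq> e' \<longrightarrow> e \<inter> e' \<noteq> {}"
    and cC: "card C = 2 * m" and m: "m \<ge> 1"
  shows "\<exists>a. \<forall>e\<in>C. a \<in> e"
proof (rule ccontr)
  assume nc: "\<not> (\<exists>a. \<forall>e\<in>C. a \<in> e)"
  have "card C > 0" using cC m by simp
  then have fin: "finite C" using card_ge_0_finite by blast
  have "C \<noteq> {}" using cC m by auto
  then obtain e1 where e1: "e1 \<in> C" by blast
  then obtain a b where ab: "e1 = {a,b}" "a \<noteq> b" using two card_2_iff by metis
  obtain x where x: "x \<in> C" "a \<notin> x" using nc by blast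
  obtain y where y: "y \<in> C" "b \<notin> y" using nc by blast
  have "e1 \<noteq> x" using x ab by auto
  then have "e1 \<inter> x \<noteq> {}" using cl e1 x(1) by blast
  then have "b \<in> x" using x ab by auto
  moreover obtain px qx where pqx: "x = {px,qx}" "px \<noteq> qx" using two x(1) card_2_iff by metis
  ultimately have "x = {b, if px = b then qx else px}" "(if px = b then qx else px) \<noteq> b" by auto
  then obtain c where xc: "x = {b,c}" "c \<noteq> b" by blast
  have "e1 \<noteq> y" using y ab by auto
  then have "e1 \<inter> y \<noteq> {}" using cl e1 y(1) by blast
  then have "a \<in> y" using y ab by auto
  moreover obtain py qy where pqy: "y = {py,qy}" "py \<noteq> qy" using two y(1) card_2_iff by metis
  ultimately have "y = {a, if py = a then qy else py}" "(if py = a then qy else py) \<noteq> a" by auto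
  then obtain d where yd: "y = {a,d}" "d \<noteq> a" by blast
  have "x \<noteq> y" using x(2) \<open>a \<in> y\<close> by auto
  then have "x \<inter> y \<noteq> {}" using cl x(1) y(1) by blast
  then have "c = d" using xc(1) yd(1) x(2) y(2) by auto
  have ca: "c \<noteq> a" using xc x by auto
  have sub: "C \<subseteq> {e1, x, y}"
  proof
    fix z assume z: "z \<in> C"
    obtain u v where uv: "z = {u,v}" "u \<noteq> v" using two z card_2_iff by metis
    show "z \<in> {e1, x, y}"
    proof (rule ccontr)
      assume "z \<notin> {e1, x, y}"
      then have n: "z \<noteq> e1" "z \<noteq> x" "z \<noteq> y" by auto
      have "z \<inter> e1 \<noteq> {}" using cl z e1 n(1) by blast
      then have i1: "{u,v} \<inter> {a,b} \<noteq> {}" using uv(1) ab(1) by simp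
      have "z \<inter> x \<noteq> {}" using cl z x(1) n(2) by blast
      then have i2: "{u,v} \<inter> {b,c} \<noteq> {}" using uv(1) xc(1) by simp
      have "z \<inter> y \<noteq> {}" using cl z y(1) n(3) by blast
      then have i3: "{u,v} \<inter> {a,c} \<noteq> {}" using uv(1) yd(1) \<open>c = d\<close> by simp
      have j1: "{u,v} \<noteq> {a,b}" using n(1) uv(1) ab(1) by simp
      have j2: "{u,v} \<noteq> {b,c}" using n(2) uv(1) xc(1) by simp
      have j3: "{u,v} \<noteq> {a,c}" using n(3) uv(1) yd(1) \<open>c = d\<close> by simp
      show False using tri[OF i1 i2 i3 j1 j2 j3 uv(2) ab(2) xc(2) ca] .
    qed
  qed
  have le3: "card C \<le> card {e1, x, y}" using sub by (intro card_mono) auto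
  have eq3: "card {e1, x, y} = 3"
    using \<open>e1 \<noteq> x\<close> \<open>e1 \<noteq> y\<close> \<open>x \<noteq> y\<close> by (simp add: card_insert_if)
  have sub3: "{e1, x, y} \<subseteq> C" using e1 x(1) y(1) by blast
  have ge: "card {e1, x, y} \<le> card C" using fin sub3 by (rule card_mono)
  from le3 eq3 ge have c3: "card C = 3" by linarith
  show False using c3 cC by presburger
qed

lemma matching_bound:
  assumes M: "M \<subseteq> lineK_vertices n"
    and dis: "\<forall>e\<in>M. \<forall>e'\<in>M. e \<noteq> e' \<longrightarrow> e \<inter> e' = {}"
  shows "2 * card M \<le> n"
proof -
  have finM: "finite M" using M unfolding lineK_vertices_def
    by (metis (no_types, lifting) Pow_iff finite_Pow_iff finite_atLeastLessThan finite_subset mem_Collect_eq subsetI)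
  have "card (\<Union>M) = sum card M"
    proof (rule card_Union_disjoint)
    show "pairwise disjnt M" using dis by (auto simp: pairwise_def disjnt_def)
    fix A assume "A \<in> M"
    then have "card A = 2" using M by (auto simp: lineK_vertices_def)
    then show "finite A" by (intro card_ge_0_finite) simp
  qed
  also have "\<dots> = sum (\<lambda>_. 2) M" using M by (intro sum.cong) (auto simp: lineK_vertices_def)
  also have "\<dots> = 2 * card M" by simp
  finally have "card (\<Union>M) = 2 * card M" .
  moreover have "\<Union>M \<subseteq> {0..<n}" using M by (auto simp: lineK_vertices_def)
  then have "card (\<Union>M) \<le> card {0..<n}" by (intro card_mono) simp_all
  then have "card (\<Union>M) \<le> n" by simp
  ultimately show ?thesis by simp
qed

lemma two_set:
  assumes "card s = 2" "p \<in> s" "q \<in> s" "p \<noteq> q" shows "s = {p, q}"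
proof -
  obtain x y where "s = {x, y}" "x \<noteq> y" using card_2_iff[THEN iffD1, OF assms(1)] by blast
  then show ?thesis using assms(2-4) by fast
qed

lemma card_V: "card (lineK_vertices n) = n choose 2"
  using n_subsets[of "{0..<n}" 2] by (simp add: lineK_vertices_def)

theorem mainTheorem7:
  fixes m :: nat
  assumes "m \<ge> 1"
  shows "is_core (lineK_vertices (2 * m + 1)) lineK_adj"
  unfolding is_core_def
proof (intro allI impI)
  fix f
  define n where "n = 2 * m + 1"
  define V where "V = lineK_vertices n"
  assume "is_endomorphism (lineK_vertices (2 * m + 1)) lineK_adj f"
  then have fV: "\<And>x. x \<in> V \<Longrightarrow> f x \<in> V"
    and fE: "\<And>x y. x \<in> V \<Longrightarrow> y \<in> V \<Longrightarrow> lineK_adj x y \<Longrightarrow> lineK_adj (f x) (f y)"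
    unfolding is_endomorphism_def V_def n_def by auto
  have Vmem: "\<And>e. e \<in> V \<longleftrightarrow> e \<subseteq> {0..<n} \<and> card e = 2"
    unfolding V_def lineK_vertices_def by auto
  have finV: "finite V" unfolding V_def lineK_vertices_def
    by (rule finite_subset[of _ "Pow {0..<n}"]) auto
  have pairV: "\<And>i j. i < n \<Longrightarrow> j < n \<Longrightarrow> i \<noteq> j \<Longrightarrow> {i, j} \<in> V"
    using Vmem by auto
  have Vpair: "\<And>e. e \<in> V \<Longrightarrow> \<exists>i j. e = {i, j} \<and> i \<noteq> j \<and> i < n \<and> j < n"
    using Vmem card_2_iff by (metis atLeastLessThan_iff insert_subset)
  have fdist: "\<And>x y. x \<in> V \<Longrightarrow> y \<in> V \<Longrightarrow> x \<noteq> y \<Longrightarrow> x \<inter> y \<noteq> {} \<Longrightarrow> f x \<noteq> f y"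
    using fE unfolding lineK_adj_def by blast
  have fmeet: "\<And>x y. x \<in> V \<Longrightarrow> y \<in> V \<Longrightarrow> x \<noteq> y \<Longrightarrow> x \<inter> y \<noteq> {} \<Longrightarrow> f x \<inter> f y \<noteq> {}"
    using fE unfolding lineK_adj_def by blast
  define S where "S i = {e \<in> V. i \<in> e}" for i
  have cardS: "card (S i) = 2 * m" if i: "i < n" for i
  proof -
    have "S i = (\<lambda>j. {i, j}) ` ({0..<n} - {i})"
    proof
      show "S i \<subseteq> (\<lambda>j. {i, j}) ` ({0..<n} - {i})"
      proof
        fix e assume "e \<in> S i"
        then have e: "e \<in> V" "i \<in> e" unfolding S_def by auto
        then obtain a b where "e = {a, b}" "a \<noteq> b" "a < n" "b < n" using Vpair by blast
        then show "e \<in> (\<lambda>j. {i, j}) ` ({0..<n} - {i})" using e(2) by (auto simp: insert_commute)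
      qed
      show "(\<lambda>j. {i, j}) ` ({0..<n} - {i}) \<subseteq> S i"
        using pairV i unfolding S_def by auto
    qed
    moreover have "inj_on (\<lambda>j. {i, j}) ({0..<n} - {i})"
      by (auto simp: inj_on_def doubleton_eq_iff)
    ultimately have "card (S i) = card ({0..<n} - {i})" by (simp add: card_image)
    also have "\<dots> = 2 * m" using i n_def by simp
    finally show ?thesis .
  qed
  have SV: "S i \<subseteq> V" for i unfolding S_def by auto
  have common: "\<exists>a. \<forall>e\<in>f ` S i. a \<in> e" if i: "i < n" for i
  proof (rule clique_common[where m = m])
    show "\<forall>e\<in>f ` S i. card e = 2" using fV SV Vmem by blast
    show "\<forall>e\<in>f ` S i. \<forall>e'\<in>f ` S i. e \<noteq> e' \<longrightarrow> e \<inter> e' \<noteq> {}"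
      using fmeet SV unfolding S_def by blast
    have "inj_on f (S i)" unfolding inj_on_def using fdist unfolding S_def by blast
    then show "card (f ` S i) = 2 * m" using cardS[OF i] by (simp add: card_image)
    show "1 \<le> m" by fact
  qed
  define \<sigma> where "\<sigma> i = (SOME a. \<forall>e\<in>f ` S i. a \<in> e)" for i
  have \<sigma>: "\<sigma> i \<in> f e" if "i < n" "e \<in> V" "i \<in> e" for i e
  proof -
    have "\<forall>e\<in>f ` S i. \<sigma> i \<in> e" unfolding \<sigma>_def by (rule someI_ex) (rule common[OF that(1)])
    then show ?thesis using that unfolding S_def by blast
  qed
  have n3: "n \<ge> 3" using assms n_def by simp
  have \<sigma>n: "\<sigma> i < n" if i: "i < n" for i
  proof -
    define j where "j = (if i = 0 then 1 else 0::nat)"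
    have "j < n" "j \<noteq> i" using n3 j_def by auto
    then have "{i, j} \<in> V" using pairV i by auto
    then have "\<sigma> i \<in> f {i, j}" "f {i, j} \<in> V" using \<sigma> i fV by auto
    then show ?thesis using Vmem by auto
  qed
  have inj\<sigma>: "inj_on \<sigma> {0..<n}"
  proof (rule ccontr)
    assume "\<not> inj_on \<sigma> {0..<n}"
    then obtain i j where ij: "i < n" "j < n" "i \<noteq> j" "\<sigma> i = \<sigma> j" unfolding inj_on_def by auto
    define k where "k = \<sigma> i"
    show False
    proof (cases "\<exists>l<n. \<sigma> l \<noteq> k")
      case True
      then obtain l where l: "l < n" "\<sigma> l \<noteq> k" by blast
      have li: "l \<noteq> i" "l \<noteq> j" using l ij k_def by auto
      have form: "f {a, l} = {k, \<sigma> l}" if a: "a < n" "a \<noteq> l" "\<sigma> a = k" for a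
      proof -
        have V1: "{a, l} \<in> V" using pairV a l by auto
        then have "k \<in> f {a, l}" "\<sigma> l \<in> f {a, l}" "f {a, l} \<in> V" using \<sigma> a l fV by auto
        then show ?thesis using Vmem l(2) card_2_iff
          by (smt (verit, ccfv_threshold) insert_commute insert_iff singletonD)
      qed
      have "f {i, l} = f {j, l}" using form ij li k_def by auto
      moreover have "f {i, l} \<noteq> f {j, l}"
        using fdist pairV ij li l by (auto simp: doubleton_eq_iff)
      ultimately show False by simp
    next
      case False
      then have allk: "\<And>l. l < n \<Longrightarrow> \<sigma> l = k" by blast
      define F where "F c = {e \<in> V. f e = {k, c}}" for c
      have "V \<subseteq> (\<Union>c\<in>{0..<n} - {k}. F c)"
      proof
        fix e assume e: "e \<in> V"
        then obtain a b where ab: "e = {a, b}" "a \<noteq> b" "a < n" "b < n" using Vpair by blast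
        then have "k \<in> f e" using \<sigma> e allk by auto
        moreover have "f e \<in> V" using fV e by auto
        ultimately obtain c where "f e = {k, c}" "c \<noteq> k" "c < n"
          using Vmem card_2_iff
          by (smt (verit, ccfv_threshold) atLeastLessThan_iff insert_commute insert_iff insert_subset singletonD)
        then show "e \<in> (\<Union>c\<in>{0..<n} - {k}. F c)" using e unfolding F_def by auto
      qed
      then have "card V \<le> card (\<Union>c\<in>{0..<n} - {k}. F c)"
        by (rule card_mono[rotated]) (auto simp: F_def finV)
      also have "\<dots> \<le> (\<Sum>c\<in>{0..<n} - {k}. card (F c))" by (rule card_UN_le) simp
      also have "\<dots> \<le> (\<Sum>c\<in>{0..<n} - {k}. m)"
      proof (rule sum_mono)
        fix c
        have "2 * card (F c) \<le> n"
        proof (rule matching_bound)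
          show "F c \<subseteq> lineK_vertices n" unfolding F_def V_def by auto
          show "\<forall>e\<in>F c. \<forall>e'\<in>F c. e \<noteq> e' \<longrightarrow> e \<inter> e' = {}"
            using fdist unfolding F_def by auto
        qed
        then show "card (F c) \<le> m" using n_def by simp
      qed
      also have "\<dots> = (n - 1) * m"
      proof -
        have "k < n" using allk[of 0] \<sigma>n[of 0] n3 by auto
        then show ?thesis by simp
      qed
      finally have "card V \<le> (n - 1) * m" .
      moreover have "card V = n * (n - 1) div 2" unfolding V_def by (simp add: card_V choose_two)
      moreover have "n * (n - 1) div 2 = n * m" using n_def by simp
      ultimately show False using n3 assms n_def by simp
    qed
  qed
  have fform: "f e = \<sigma> ` e" if e: "e \<in> V" for e
  proof -
    obtain a b where ab: "e = {a, b}" "a \<noteq> b" "a < n" "b < n" using Vpair e by blast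
    have ae: "a \<in> e" "b \<in> e" using ab(1) by simp_all
    have s1: "\<sigma> a \<in> f e" using \<sigma>[OF ab(3) e ae(1)] .
    have s2: "\<sigma> b \<in> f e" using \<sigma>[OF ab(4) e ae(2)] .
    have s3: "\<sigma> a \<noteq> \<sigma> b" using inj_onD[OF inj\<sigma>, of a b] ab(2,3,4) by auto
    have s4: "card (f e) = 2" using fV[OF e] Vmem by simp
    have "f e = {\<sigma> a, \<sigma> b}" using two_set[OF s4 s1 s2 s3] .
    then show ?thesis using ab(1) by simp
  qed
  have Vsub: "e \<in> V \<Longrightarrow> e \<subseteq> {0..<n}" for e using Vmem by auto
  have injf: "inj_on f V"
  proof (rule inj_onI)
    fix x y assume "x \<in> V" "y \<in> V" "f x = f y"
    then have "\<sigma> ` x = \<sigma> ` y" using fform by simp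
    then show "x = y" using inj_on_image_eq_iff[OF inj\<sigma>] Vsub \<open>x \<in> V\<close> \<open>y \<in> V\<close> by blast
  qed
  have "f ` V = V" using endo_inj_surj[OF finV _ injf] fV by blast
  then have bij: "bij_betw f V V" using injf by (simp add: bij_betw_def)
  have adj: "lineK_adj x y \<longleftrightarrow> lineK_adj (f x) (f y)" if "x \<in> V" "y \<in> V" for x y
  proof -
    have "f x \<inter> f y = \<sigma> ` (x \<inter> y)" using fform that inj_on_image_Int[OF inj\<sigma>] Vsub by simp
    moreover have "f x = f y \<longleftrightarrow> x = y" using injf that unfolding inj_on_def by blast
    ultimately show ?thesis unfolding lineK_adj_def by auto
  qed
  show "is_automorphism (lineK_vertices (2 * m + 1)) lineK_adj f"
    unfolding is_automorphism_def using bij adj unfolding V_def n_def by blast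
qed

end
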